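(* Let $\mathcal L$ be a finite distributive lattice, $\mathcal I$ a poset ideal and $\mathcal J$ a poset coideal of $\mathcal L$ such that $\mathcal I\cup\mathcal J=\mathcal L$. Then $H_{\mathcal I\cap\mathcal J}=H_{\mathcal I}\cap H_{\mathcal J}$ if and only if for each pair $p,q\in\mathcal L$ such that $q$ is a lower neighbor of $p$, either $p\in\mathcal I$ or $q\in\mathcal J$.
   Context: Let $P$ be the set of join-irreducible elements of $\mathcal L$ (elements with exactly one lower neighbor), with the induced order; for $p\in\mathcal L$ put $\ell(p)=\{q\in P:q\le p\}$. Let $K$ be a field and $S=K[x_p,y_p: p\in P]$ with all variables of degree 1. For $q\in\mathcal L$ put $u_q=\prod_{p\in\ell(q)}x_p\prod_{p\in P\setminus\ell(q)}y_p$, and for a subset $\mathcal S\subseteq\mathcal L$ let $H_{\mathcal S}$ be the ideal of $S$ generated by $\{u_q:q\in\mathcal S\}$ (the zero ideal if $\mathcal S=\emptyset$). $q$ is a lower neighbor of $p$ if $q<p$ and no element lies strictly between them. A poset ideal $\mathcal I$ satisfies: $\alpha\in\mathcal I,\ \beta<\alpha\Rightarrow\beta\in\mathcal I$; a poset coideal satisfies: $\alpha\in\mathcal J,\ \beta>\alpha\Rightarrow\beta\in\mathcal J$. *)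

theory Defs
  imports Main "HOL-Library.Poly_Mapping"
begin

definition lower_neighbor :: "'a::order \<Rightarrow> 'a \<Rightarrow> bool" where
  "lower_neighbor q p \<longleftrightarrow> q < p \<and> \<not> (\<exists>r. q < r \<and> r < p)"

definition join_irreducibles :: "'a::order set" where
  "join_irreducibles = {p. card {q. lower_neighbor q p} = 1}"

definition lower_set :: "'a::order \<Rightarrow> 'a set" where
  "lower_set p = {q \<in> join_irreducibles. q \<le> p}"

definition poset_ideal :: "'a::order set \<Rightarrow> bool" where
  "poset_ideal I \<longleftrightarrow> (\<forall>a \<in> I. \<forall>b. b < a \<longrightarrow> b \<in> I)"

definition poset_coideal :: "'a::order set \<Rightarrow> bool" where
  "poset_coideal J \<longleftrightarrow> (\<forall>a \<in> J. \<forall>b. b > a \<longrightarrow> b \<in> J)"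

text \<open>Polynomials over K in variables indexed by 'a \<times> bool:
  (p, True) is x_p and (p, False) is y_p.\<close>

type_synonym ('a, 'k) mpoly = "(('a \<times> bool) \<Rightarrow>\<^sub>0 nat) \<Rightarrow>\<^sub>0 'k"

definition var :: "'a \<times> bool \<Rightarrow> ('a, 'k::comm_ring_1) mpoly" where
  "var v = Poly_Mapping.single (Poly_Mapping.single v 1) 1"

definition ring_S :: "('a::order, 'k::comm_ring_1) mpoly set" where
  "ring_S = {f. \<forall>m \<in> Poly_Mapping.keys f. \<forall>v \<in> Poly_Mapping.keys m. fst v \<in> join_irreducibles}"

definition u_mon :: "'a::order \<Rightarrow> ('a, 'k::comm_ring_1) mpoly" where
  "u_mon q = (\<Prod>p\<in>lower_set q. var (p, True)) *
             (\<Prod>p\<in>join_irreducibles - lower_set q. var (p, False))"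

definition gen_ideal :: "'r::comm_ring_1 set \<Rightarrow> 'r set \<Rightarrow> 'r set" where
  "gen_ideal R G = {(\<Sum>g\<in>G. c g * g) | c. \<forall>g\<in>G. c g \<in> R}"

definition H_ideal :: "'a::order set \<Rightarrow> ('a, 'k::comm_ring_1) mpoly set" where
  "H_ideal A = gen_ideal ring_S (u_mon ` A)"

end

theory Submission
  imports Defs
begin


lemma exists_cover_above:
  fixes x y :: "'a::{finite,order}"
  assumes "x < y" shows "\<exists>w. lower_neighbor x w \<and> w \<le> y"
proof -
  obtain m where m: "m \<in> {w. x < w \<and> w \<le> y}" "\<forall>b\<in>{w. x < w \<and> w \<le> y}. b \<le> m \<longrightarrow> m = b"
    using finite_has_minimal[of "{w. x < w \<and> w \<le> y}"] assms by auto
  have "\<not> (\<exists>r. x < r \<and> r < m)"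
  proof
    assume "\<exists>r. x < r \<and> r < m"
    then obtain r where r: "x < r" "r < m" by blast
    have "r \<le> y" using order.trans[OF less_imp_le[OF r(2)]] m(1) by simp
    hence "m = r" using m(2) r by simp
    thus False using r by simp
  qed
  hence "lower_neighbor x m" unfolding lower_neighbor_def using m(1) by simp
  thus ?thesis using m by auto
qed

lemma exists_cover_below:
  fixes x y :: "'a::{finite,order}"
  assumes "x < y" shows "\<exists>w. lower_neighbor w y \<and> x \<le> w"
proof -
  obtain m where m: "m \<in> {w. x \<le> w \<and> w < y}" "\<forall>b\<in>{w. x \<le> w \<and> w < y}. m \<le> b \<longrightarrow> m = b"
    using finite_has_maximal[of "{w. x \<le> w \<and> w < y}"] assms by auto
  have "\<not> (\<exists>r. m < r \<and> r < y)"
  proof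
    assume "\<exists>r. m < r \<and> r < y"
    then obtain r where r: "m < r" "r < y" by blast
    have "x \<le> r" using order.trans[OF _ less_imp_le[OF r(1)]] m(1) by simp
    hence "m = r" using m(2) r by simp
    thus False using r by simp
  qed
  hence "lower_neighbor m y" unfolding lower_neighbor_def using m(1) by simp
  thus ?thesis using m by auto
qed

lemma birkhoff:
  fixes x y :: "'a::{finite,lattice}"
  assumes "\<And>r. r \<in> join_irreducibles \<Longrightarrow> r \<le> x \<Longrightarrow> r \<le> y"
  shows "x \<le> y"
proof (rule ccontr)
  assume nle: "\<not> x \<le> y"
  obtain z where z: "z \<in> {z. z \<le> x \<and> \<not> z \<le> y}" "\<forall>b\<in>{z. z \<le> x \<and> \<not> z \<le> y}. b \<le> z \<longrightarrow> z = b"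
    using finite_has_minimal[of "{z. z \<le> x \<and> \<not> z \<le> y}"] nle by auto
  have zy: "inf z y < z"
  proof -
    have "inf z y \<noteq> z" using z(1) inf.absorb_iff1[of z y] by auto
    thus ?thesis by (simp add: order_less_le)
  qed
  have low: "w \<le> inf z y" if "w < z" for w
  proof -
    have wx: "w \<le> x" using order.trans[OF less_imp_le[OF that]] z(1) by simp
    have "w \<le> y"
    proof (rule ccontr)
      assume "\<not> w \<le> y"
      hence "z = w" using z(2) wx that by simp
      thus False using that by simp
    qed
    thus ?thesis using that by simp
  qed
  have "{q. lower_neighbor q z} = {inf z y}"
  proof
    show "{q. lower_neighbor q z} \<subseteq> {inf z y}"
    proof
      fix q assume "q \<in> {q. lower_neighbor q z}"
      hence q: "q < z" "\<not> (\<exists>r. q < r \<and> r < z)" unfolding lower_neighbor_def by auto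
      have "q \<le> inf z y" using low q by auto
      thus "q \<in> {inf z y}" using q zy by (auto simp: order_le_less)
    qed
  next
    obtain w where w: "lower_neighbor w z" "inf z y \<le> w" using exists_cover_below[OF zy] by auto
    have "w \<le> inf z y" using low w(1) unfolding lower_neighbor_def by auto
    hence "w = inf z y" using w(2) by (rule order.antisym)
    thus "{inf z y} \<subseteq> {q. lower_neighbor q z}" using w by auto
  qed
  hence "z \<in> join_irreducibles" unfolding join_irreducibles_def by simp
  thus False using assms z(1) by auto
qed

lemma ji_prime:
  fixes p a b :: "'a::{finite,distrib_lattice}"
  assumes "p \<in> join_irreducibles" "p \<le> sup a b"
  shows "p \<le> a \<or> p \<le> b"
proof (rule ccontr)
  assume "\<not> (p \<le> a \<or> p \<le> b)"
  hence na: "\<not> p \<le> a" and nb: "\<not> p \<le> b" by auto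
  have "inf p a \<noteq> p" using na inf.absorb_iff1[of p a] by auto
  hence la: "inf p a < p" by (simp add: order_less_le)
  have "inf p b \<noteq> p" using nb inf.absorb_iff1[of p b] by auto
  hence lb: "inf p b < p" by (simp add: order_less_le)
  obtain w1 where w1: "lower_neighbor w1 p" "inf p a \<le> w1" using exists_cover_below[OF la] by auto
  obtain w2 where w2: "lower_neighbor w2 p" "inf p b \<le> w2" using exists_cover_below[OF lb] by auto
  have "card {q. lower_neighbor q p} = 1" using assms(1) unfolding join_irreducibles_def by simp
  then obtain w where "{q. lower_neighbor q p} = {w}" using card_1_singletonE by blast
  hence e: "w1 = w" "w2 = w" using w1 w2 by auto
  have "p = inf p (sup a b)" using assms(2) by (simp add: inf.absorb1)
  also have "\<dots> = sup (inf p a) (inf p b)" by (rule inf_sup_distrib1)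
  also have "\<dots> \<le> w" using w1 w2 e by auto
  finally have "p \<le> w" .
  moreover have "w < p" using w1 e unfolding lower_neighbor_def by auto
  ultimately show False by simp
qed


lemma expand_pm: "f = (\<Sum>m\<in>Poly_Mapping.keys f. Poly_Mapping.single m (Poly_Mapping.lookup f m))"
proof (rule poly_mapping_eqI)
  fix k
  show "Poly_Mapping.lookup f k = Poly_Mapping.lookup (\<Sum>m\<in>Poly_Mapping.keys f. Poly_Mapping.single m (Poly_Mapping.lookup f m)) k"
    by (cases "k \<in> Poly_Mapping.keys f") (simp_all add: lookup_sum lookup_single when_def in_keys_iff)
qed

lemma zero_in_S: "0 \<in> ring_S" unfolding ring_S_def by simp

lemma add_in_S:
  assumes "f \<in> ring_S" "g \<in> ring_S" shows "f + g \<in> ring_S"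
  unfolding ring_S_def mem_Collect_eq
proof (intro ballI)
  fix m v assume m: "m \<in> Poly_Mapping.keys (f + g)" and v: "v \<in> Poly_Mapping.keys m"
  have "m \<in> Poly_Mapping.keys f \<or> m \<in> Poly_Mapping.keys g" using m keys_add[of f g] by blast
  thus "fst v \<in> join_irreducibles" using assms v unfolding ring_S_def by blast
qed

lemma gen_ideal_0: "0 \<in> gen_ideal ring_S G"
  unfolding gen_ideal_def mem_Collect_eq
  by (rule exI[of _ "\<lambda>_. 0"]) (simp add: zero_in_S)

lemma gen_ideal_add:
  assumes "f \<in> gen_ideal ring_S G" "g \<in> gen_ideal ring_S G"
  shows "f + g \<in> gen_ideal ring_S G"
proof -
  obtain c1 where c1: "f = (\<Sum>h\<in>G. c1 h * h)" "\<forall>h\<in>G. c1 h \<in> ring_S" using assms(1) unfolding gen_ideal_def by auto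
  obtain c2 where c2: "g = (\<Sum>h\<in>G. c2 h * h)" "\<forall>h\<in>G. c2 h \<in> ring_S" using assms(2) unfolding gen_ideal_def by auto
  have e: "f + g = (\<Sum>h\<in>G. (c1 h + c2 h) * h)" using c1 c2 by (simp add: sum.distrib distrib_right)
  have r: "\<forall>h\<in>G. c1 h + c2 h \<in> ring_S" using c1 c2 add_in_S by blast
  show ?thesis unfolding gen_ideal_def mem_Collect_eq
    by (rule exI[of _ "\<lambda>h. c1 h + c2 h"], rule conjI[OF e r])
qed

lemma gen_ideal_sum:
  assumes "finite A" "\<And>a. a \<in> A \<Longrightarrow> f a \<in> gen_ideal ring_S G"
  shows "(\<Sum>a\<in>A. f a) \<in> gen_ideal ring_S G"
  using assms by (induction A rule: finite_induct) (auto intro: gen_ideal_0 gen_ideal_add)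

lemma gen_ideal_gen:
  assumes "finite G" "c \<in> ring_S" "g \<in> G"
  shows "c * g \<in> gen_ideal ring_S G"
proof -
  have "(\<Sum>h\<in>G. (if h = g then c else 0) * h) = (\<Sum>h\<in>G. if h = g then c * g else 0)"
    by (rule sum.cong) auto
  also have "\<dots> = c * g" using assms by simp
  finally have e: "c * g = (\<Sum>h\<in>G. (if h = g then c else 0) * h)" by simp
  have "\<forall>h\<in>G. (if h = g then c else 0) \<in> ring_S" using assms(2) zero_in_S by auto
  note r = this
  show ?thesis unfolding gen_ideal_def mem_Collect_eq
    by (rule exI[of _ "\<lambda>h. if h = g then c else 0"], rule conjI[OF e r])
qed

lemma gen_ideal_mono_char:
  fixes T :: "(('a::order \<times> bool) \<Rightarrow>\<^sub>0 nat) set" and f :: "('a, 'k::field) mpoly"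
  assumes "finite T" and TS: "\<forall>t\<in>T. \<forall>v\<in>Poly_Mapping.keys t. fst v \<in> join_irreducibles"
  shows "f \<in> gen_ideal ring_S ((\<lambda>t. Poly_Mapping.single t 1) ` T) \<longleftrightarrow>
         f \<in> ring_S \<and> (\<forall>m\<in>Poly_Mapping.keys f. \<exists>t\<in>T. \<forall>v. Poly_Mapping.lookup t v \<le> Poly_Mapping.lookup m v)"
    (is "_ \<in> gen_ideal _ ?G \<longleftrightarrow> _")
proof
  assume "f \<in> gen_ideal ring_S ?G"
  then obtain c where c: "f = (\<Sum>h\<in>?G. c h * h)" "\<forall>h\<in>?G. c h \<in> ring_S" unfolding gen_ideal_def by auto
  have key: "(\<exists>t\<in>T. \<forall>v. Poly_Mapping.lookup t v \<le> Poly_Mapping.lookup m v) \<and> (\<forall>v\<in>Poly_Mapping.keys m. fst v \<in> join_irreducibles)"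
    if m: "m \<in> Poly_Mapping.keys f" for m
  proof -
    have mk: "m \<in> Poly_Mapping.keys (\<Sum>h\<in>?G. c h * h)" using m c(1) by simp
    have "m \<in> (\<Union>h\<in>?G. Poly_Mapping.keys (c h * h))" using subsetD[OF keys_sum mk] .
    then obtain h where h: "h \<in> ?G" "m \<in> Poly_Mapping.keys (c h * h)" by (rule UN_E) simp
    from h(1) obtain t where t: "t \<in> T" "h = Poly_Mapping.single t 1" by (rule imageE) simp
    have "m \<in> {a + b | a b. a \<in> Poly_Mapping.keys (c h) \<and> b \<in> Poly_Mapping.keys h}"
      using subsetD[OF keys_mult h(2)] .
    then obtain a where a: "a \<in> Poly_Mapping.keys (c h)" "m = a + t" using t(2) by auto
    have "\<forall>v. Poly_Mapping.lookup t v \<le> Poly_Mapping.lookup m v" using a by (simp add: lookup_add)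
    moreover have "\<forall>v\<in>Poly_Mapping.keys m. fst v \<in> join_irreducibles"
    proof
      fix v assume "v \<in> Poly_Mapping.keys m"
      hence "v \<in> Poly_Mapping.keys a \<union> Poly_Mapping.keys t" using a(2) keys_add[of a t] by auto
      moreover have "c h \<in> ring_S" using c(2) h(1) by blast
      ultimately show "fst v \<in> join_irreducibles" using a(1) TS t(1) unfolding ring_S_def by auto
    qed
    ultimately show ?thesis using t(1) by blast
  qed
  have "f \<in> ring_S" unfolding ring_S_def mem_Collect_eq using key by simp
  thus "f \<in> ring_S \<and> (\<forall>m\<in>Poly_Mapping.keys f. \<exists>t\<in>T. \<forall>v. Poly_Mapping.lookup t v \<le> Poly_Mapping.lookup m v)"
    using key by simp
next
  assume r: "f \<in> ring_S \<and> (\<forall>m\<in>Poly_Mapping.keys f. \<exists>t\<in>T. \<forall>v. Poly_Mapping.lookup t v \<le> Poly_Mapping.lookup m v)"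
  have fin: "finite ?G" using assms(1) by simp
  have "Poly_Mapping.single m (Poly_Mapping.lookup f m) \<in> gen_ideal ring_S ?G" if m: "m \<in> Poly_Mapping.keys f" for m
  proof -
    obtain t where t: "t \<in> T" "\<forall>v. Poly_Mapping.lookup t v \<le> Poly_Mapping.lookup m v" using r m by blast
    have e: "(m - t) + t = m"
    proof (rule poly_mapping_eqI)
      fix k
      have "Poly_Mapping.lookup t k \<le> Poly_Mapping.lookup m k" using t(2) by blast
      thus "Poly_Mapping.lookup (m - t + t) k = Poly_Mapping.lookup m k" by (simp add: lookup_add lookup_minus)
    qed
    have eq: "Poly_Mapping.single m (Poly_Mapping.lookup f m) = Poly_Mapping.single (m - t) (Poly_Mapping.lookup f m) * Poly_Mapping.single t 1"
      by (simp add: mult_single e)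
    have mS: "\<forall>v\<in>Poly_Mapping.keys m. fst v \<in> join_irreducibles" using r m unfolding ring_S_def by simp
    have sub: "Poly_Mapping.keys (m - t) \<subseteq> Poly_Mapping.keys m" by (auto simp: in_keys_iff lookup_minus)
    have cS: "Poly_Mapping.single (m - t) (Poly_Mapping.lookup f m) \<in> ring_S"
      unfolding ring_S_def mem_Collect_eq
    proof (intro ballI)
      fix mm v assume mm: "mm \<in> Poly_Mapping.keys (Poly_Mapping.single (m - t) (Poly_Mapping.lookup f m))"
        and v: "v \<in> Poly_Mapping.keys mm"
      have "mm = m - t" using mm by (simp split: if_splits)
      thus "fst v \<in> join_irreducibles" using v sub mS by auto
    qed
    have gG: "Poly_Mapping.single t 1 \<in> ?G" using t(1) by (rule imageI)
    show ?thesis unfolding eq by (rule gen_ideal_gen[OF fin cS gG])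
  qed
  hence "(\<Sum>m\<in>Poly_Mapping.keys f. Poly_Mapping.single m (Poly_Mapping.lookup f m)) \<in> gen_ideal ring_S ?G"
    by (intro gen_ideal_sum) auto
  thus "f \<in> gen_ideal ring_S ?G" using expand_pm[of f] by simp
qed

definition Uexp :: "'a::order \<Rightarrow> ('a \<times> bool) \<Rightarrow>\<^sub>0 nat" where
  "Uexp q = (\<Sum>p\<in>lower_set q. Poly_Mapping.single (p, True) 1) +
            (\<Sum>p\<in>join_irreducibles - lower_set q. Poly_Mapping.single (p, False) 1)"

lemma prod_var: "finite A \<Longrightarrow> (\<Prod>p\<in>A. var (f p) :: ('a, 'k::comm_ring_1) mpoly)
   = Poly_Mapping.single (\<Sum>p\<in>A. Poly_Mapping.single (f p) 1) 1"
  by (induction A rule: finite_induct) (simp_all add: var_def mult_single add.commute)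

lemma u_mon_eq: "(u_mon q :: ('a::{finite,order}, 'k::comm_ring_1) mpoly) = Poly_Mapping.single (Uexp q) 1"
  unfolding u_mon_def Uexp_def by (simp add: prod_var mult_single)

lemma lookup_Uexp: "Poly_Mapping.lookup (Uexp (q::'a::{finite,order})) (p, b) =
   (if p \<in> join_irreducibles \<and> b = (p \<le> q) then 1 else 0)"
  unfolding Uexp_def lower_set_def
  by (cases b) (auto simp: lookup_add lookup_sum lookup_single when_def)

lemma between_exists:
  fixes I J :: "('a::{finite, distrib_lattice}) set"
  assumes "poset_ideal I" and "poset_coideal J"
    and cond: "\<forall>p q. lower_neighbor q p \<longrightarrow> p \<in> I \<or> q \<in> J"
    and "a \<in> I" "b \<in> J"
  shows "\<exists>c\<in>I \<inter> J. inf a b \<le> c \<and> c \<le> sup a b"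
proof -
  have abI: "inf a b \<in> I"
  proof (cases "inf a b = a")
    case True thus ?thesis using assms(4) by simp
  next
    case False
    hence "inf a b < a" by (simp add: order_less_le)
    thus ?thesis using assms(1,4) unfolding poset_ideal_def by blast
  qed
  have abJ: "sup a b \<in> J"
  proof (cases "sup a b = b")
    case True thus ?thesis using assms(5) by simp
  next
    case False
    hence "b < sup a b" by (simp add: order_less_le)
    thus ?thesis using assms(2,5) unfolding poset_coideal_def by blast
  qed
  define S where "S = {c\<in>I. inf a b \<le> c \<and> c \<le> sup a b}"
  have "inf a b \<in> S" unfolding S_def using abI by (simp add: le_supI1)
  hence ne: "S \<noteq> {}" by blast
  have fin: "finite S" by simp
  obtain c where c: "c \<in> S" "\<forall>x\<in>S. c \<le> x \<longrightarrow> c = x"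
    using finite_has_maximal[OF fin ne] by blast
  have cI: "c \<in> I" and c1: "inf a b \<le> c" and c2: "c \<le> sup a b" using c(1) unfolding S_def by auto
  show ?thesis
  proof (cases "c \<in> J")
    case True thus ?thesis using cI c1 c2 by blast
  next
    case False
    hence "c \<noteq> sup a b" using abJ by blast
    hence "c < sup a b" using c2 by (simp add: order_less_le)
    then obtain w where w: "lower_neighbor c w" "w \<le> sup a b" using exists_cover_above by blast
    hence wI: "w \<in> I" using cond False by blast
    have cw: "c < w" using w unfolding lower_neighbor_def by auto
    have "inf a b \<le> w" using order.trans[OF c1 less_imp_le[OF cw]] .
    hence "w \<in> S" unfolding S_def using wI w(2) by simp
    hence "c = w" using c(2) less_imp_le[OF cw] by blast
    thus ?thesis using cw by simp
  qed
qed

lemma Uexp_keys: "v \<in> Poly_Mapping.keys (Uexp (q::'a::{finite,order})) \<Longrightarrow> fst v \<in> join_irreducibles"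
proof -
  assume v: "v \<in> Poly_Mapping.keys (Uexp q)"
  obtain p b where pb: "v = (p, b)" by (cases v)
  have "Poly_Mapping.lookup (Uexp q) (p, b) \<noteq> 0" using v pb by (simp add: in_keys_iff)
  hence "p \<in> join_irreducibles" unfolding lookup_Uexp by (cases "p \<in> join_irreducibles") simp_all
  thus ?thesis using pb by simp
qed

lemma H_char:
  "(f :: ('a::{finite,order}, 'k::field) mpoly) \<in> H_ideal A \<longleftrightarrow>
    f \<in> ring_S \<and> (\<forall>m\<in>Poly_Mapping.keys f. \<exists>a\<in>A. \<forall>v. Poly_Mapping.lookup (Uexp a) v \<le> Poly_Mapping.lookup m v)"
proof -
  have um: "(u_mon :: 'a \<Rightarrow> ('a, 'k) mpoly) = (\<lambda>q. Poly_Mapping.single (Uexp q) 1)"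
    by (rule ext) (rule u_mon_eq)
  have "(u_mon :: 'a \<Rightarrow> ('a, 'k) mpoly) ` A = (\<lambda>t. Poly_Mapping.single t (1::'k)) ` (Uexp ` A)"
    unfolding um by (simp add: image_image)
  hence H: "(H_ideal A :: ('a, 'k) mpoly set) = gen_ideal ring_S ((\<lambda>t. Poly_Mapping.single t (1::'k)) ` (Uexp ` A))"
    unfolding H_ideal_def by simp
  have TS: "\<forall>t\<in>Uexp ` A. \<forall>v\<in>Poly_Mapping.keys t. fst v \<in> join_irreducibles"
    using Uexp_keys by blast
  have fin: "finite (Uexp ` A)" by simp
  have ex: "(\<exists>t\<in>Uexp ` A. \<forall>v. Poly_Mapping.lookup t v \<le> Poly_Mapping.lookup m v) \<longleftrightarrow>
            (\<exists>a\<in>A. \<forall>v. Poly_Mapping.lookup (Uexp a) v \<le> Poly_Mapping.lookup m v)" for m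
    by blast
  show ?thesis unfolding H gen_ideal_mono_char[OF fin TS] ex ..
qed

lemma div_between:
  fixes a b c :: "'a::{finite, distrib_lattice}"
  assumes "inf a b \<le> c" "c \<le> sup a b"
    and "\<forall>v. Poly_Mapping.lookup (Uexp a) v \<le> Poly_Mapping.lookup m v"
    and "\<forall>v. Poly_Mapping.lookup (Uexp b) v \<le> Poly_Mapping.lookup m v"
  shows "\<forall>v. Poly_Mapping.lookup (Uexp c) v \<le> Poly_Mapping.lookup m v"
proof
  fix v :: "'a \<times> bool"
  obtain p bb where v: "v = (p, bb)" by (cases v)
  show "Poly_Mapping.lookup (Uexp c) v \<le> Poly_Mapping.lookup m v"
  proof (cases "p \<in> join_irreducibles \<and> bb = (p \<le> c)")
    case False
    have "Poly_Mapping.lookup (Uexp c) v = 0" unfolding v lookup_Uexp using False by (rule if_not_P)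
    thus ?thesis by simp
  next
    case True
    hence pJ: "p \<in> join_irreducibles" and bbc: "bb = (p \<le> c)" by auto
    have A: "Poly_Mapping.lookup (Uexp a) (p, bb) \<le> Poly_Mapping.lookup m (p, bb)" using assms(3) by blast
    have B: "Poly_Mapping.lookup (Uexp b) (p, bb) \<le> Poly_Mapping.lookup m (p, bb)" using assms(4) by blast
    have C: "Poly_Mapping.lookup (Uexp c) (p, bb) = 1" using pJ bbc by (simp add: lookup_Uexp)
    show ?thesis
    proof (cases bb)
      case bb: True
      hence "p \<le> c" using bbc by simp
      hence "p \<le> sup a b" using assms(2) by (rule order.trans)
      hence "p \<le> a \<or> p \<le> b" using pJ ji_prime by blast
      thus ?thesis
      proof
        assume "p \<le> a"
        hence "Poly_Mapping.lookup (Uexp a) (p, bb) = 1" using pJ bb by (simp add: lookup_Uexp)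
        thus ?thesis using A C v by simp
      next
        assume "p \<le> b"
        hence "Poly_Mapping.lookup (Uexp b) (p, bb) = 1" using pJ bb by (simp add: lookup_Uexp)
        thus ?thesis using B C v by simp
      qed
    next
      case bb: False
      hence "\<not> p \<le> c" using bbc by simp
      hence "\<not> p \<le> inf a b" using assms(1) order.trans by blast
      hence "\<not> p \<le> a \<or> \<not> p \<le> b" by simp
      thus ?thesis
      proof
        assume "\<not> p \<le> a"
        hence "Poly_Mapping.lookup (Uexp a) (p, bb) = 1" using pJ bb by (simp add: lookup_Uexp)
        thus ?thesis using A C v by simp
      next
        assume "\<not> p \<le> b"
        hence "Poly_Mapping.lookup (Uexp b) (p, bb) = 1" using pJ bb by (simp add: lookup_Uexp)
        thus ?thesis using B C v by simp
      qed
    qed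
  qed
qed

theorem theorem3p8:
  fixes I J :: "('a::{finite, distrib_lattice}) set"
  assumes "poset_ideal I" and "poset_coideal J" and "I \<union> J = UNIV"
  shows "(H_ideal (I \<inter> J) = (H_ideal I \<inter> H_ideal J :: ('a, 'k::field) mpoly set))
     \<longleftrightarrow> (\<forall>p q. lower_neighbor q p \<longrightarrow> p \<in> I \<or> q \<in> J)"
proof
  assume eq: "H_ideal (I \<inter> J) = (H_ideal I \<inter> H_ideal J :: ('a, 'k::field) mpoly set)"
  show "\<forall>p q. lower_neighbor q p \<longrightarrow> p \<in> I \<or> q \<in> J"
  proof (intro allI impI, rule ccontr)
    fix p q assume ln: "lower_neighbor q p" and n: "\<not> (p \<in> I \<or> q \<in> J)"
    have pJ: "p \<in> J" and qI: "q \<in> I" using n assms(3) by auto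
    have qp: "q < p" using ln unfolding lower_neighbor_def by auto
    define m where "m = Uexp p + Uexp q"
    define f :: "('a, 'k) mpoly" where "f = Poly_Mapping.single m 1"
    have kf: "Poly_Mapping.keys f = {m}" unfolding f_def by simp
    have fS: "f \<in> ring_S" unfolding ring_S_def mem_Collect_eq kf m_def
      using keys_add[of "Uexp p" "Uexp q"] Uexp_keys by blast
    have lm: "Poly_Mapping.lookup m v = Poly_Mapping.lookup (Uexp p) v + Poly_Mapping.lookup (Uexp q) v" for v
      unfolding m_def by (simp add: lookup_add)
    have "f \<in> H_ideal I" unfolding H_char using fS kf qI lm by (auto intro!: bexI[of _ q])
    moreover have "f \<in> H_ideal J" unfolding H_char using fS kf pJ lm by (auto intro!: bexI[of _ p])
    ultimately have "f \<in> H_ideal (I \<inter> J)" using eq by auto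
    then obtain c where c: "c \<in> I \<inter> J" "\<forall>v. Poly_Mapping.lookup (Uexp c) v \<le> Poly_Mapping.lookup m v"
      unfolding H_char kf by auto
    have "c \<le> p"
    proof (rule birkhoff)
      fix r assume r: "r \<in> join_irreducibles" "r \<le> c"
      have "Poly_Mapping.lookup (Uexp c) (r, True) \<le> Poly_Mapping.lookup m (r, True)" using c by auto
      hence "r \<le> p \<or> r \<le> q" using r by (simp add: lm lookup_Uexp split: if_splits)
      thus "r \<le> p" using qp by auto
    qed
    moreover have "q \<le> c"
    proof (rule birkhoff)
      fix r assume r: "r \<in> join_irreducibles" "r \<le> q"
      have rp: "r \<le> p" using r qp by auto
      show "r \<le> c"
      proof (rule ccontr)
        assume "\<not> r \<le> c"
        moreover have "Poly_Mapping.lookup (Uexp c) (r, False) \<le> Poly_Mapping.lookup m (r, False)" using c by auto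
        ultimately show False using r rp by (simp add: lm lookup_Uexp)
      qed
    qed
    ultimately have "c = p \<or> c = q" using ln unfolding lower_neighbor_def
      by (auto simp: order_le_less)
    thus False using c n by auto
  qed
next
  assume cond: "\<forall>p q. lower_neighbor q p \<longrightarrow> p \<in> I \<or> q \<in> J"
  show "H_ideal (I \<inter> J) = (H_ideal I \<inter> H_ideal J :: ('a, 'k::field) mpoly set)"
  proof (intro set_eqI iffI)
    fix f :: "('a, 'k) mpoly"
    assume "f \<in> H_ideal (I \<inter> J)"
    thus "f \<in> H_ideal I \<inter> H_ideal J" unfolding Int_iff H_char by blast
  next
    fix f :: "('a, 'k) mpoly"
    assume f: "f \<in> H_ideal I \<inter> H_ideal J"
    show "f \<in> H_ideal (I \<inter> J)" unfolding H_char
    proof (intro conjI ballI)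
      show "f \<in> ring_S" using f H_char by blast
    next
      fix m assume m: "m \<in> Poly_Mapping.keys f"
      obtain a where a: "a \<in> I" "\<forall>v. Poly_Mapping.lookup (Uexp a) v \<le> Poly_Mapping.lookup m v"
        using f m H_char[of f I] by auto
      obtain b where b: "b \<in> J" "\<forall>v. Poly_Mapping.lookup (Uexp b) v \<le> Poly_Mapping.lookup m v"
        using f m H_char[of f J] by auto
      obtain c where c: "c \<in> I \<inter> J" "inf a b \<le> c" "c \<le> sup a b"
        using between_exists[OF assms(1,2) cond a(1) b(1)] by blast
      show "\<exists>c\<in>I \<inter> J. \<forall>v. Poly_Mapping.lookup (Uexp c) v \<le> Poly_Mapping.lookup m v"
        using c div_between[OF c(2,3) a(2) b(2)] by blast
    qed
  qed
qed

end
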